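(* Let $n_1,n_2,n_3$ be integers with $3\le n_1,n_2\le n_3$ and let $W$ be a basic landmark system for $K(\mathbf{n})$. Then $W$ is a resolving set of $K(\mathbf{n})$ if and only if the landmark graph $\mathcal{G}(W)$ contains no bad $4$-cycle, no plain hex, and no shark teeth.
   Context: $K(\mathbf{n})=K_{n_1}\times K_{n_2}\times K_{n_3}$ is the direct product of complete graphs: its vertices are the triples $(x_1,x_2,x_3)$ with $1\le x_i\le n_i$, and two vertices are adjacent iff they differ in every coordinate. $d$ denotes graph distance. A set $W$ of vertices is resolving if for every two distinct vertices $x,y\notin W$ there is $w\in W$ with $d(x,w)\ne d(y,w)$. Landmark graph: for $W$ a set of vertices, let $W_{i,a}=\{w\in W: w_i=a\}$. The landmark graph $\mathcal{G}(W)$ is the hypergraph with vertex set $W$ whose hyperedges are the nonempty sets $W_{i,a}$ ($W_{i,a}$ has color $i$). A hyperedge with exactly two vertices is a stick, with at least three vertices poofy. Basic landmark system: $W$ such that (1) $W_{i,a}\neq\emptyset$ for all $i\in\{1,2,3\}$, $1\le a\le n_i$; (2) $|W_{i,a}|\ge 2$ for all such $i,a$; (3) $|W_{i,a}\cap W_{j,b}|\le 1$ whenever $i\ne j$. Bad $4$-cycle: distinct $w_1,w_2,w_3,w_4\in W$ and $\{i,j,k\}=\{1,2,3\}$ such that $\{w_1,w_2\}$ and $\{w_3,w_4\}$ are both hyperedges of color $i$, $w_2,w_3$ lie in a common hyperedge of color $j$, and $w_4,w_1$ lie in a common hyperedge of color $k$. Plain hex: distinct $w_1,\dots,w_6\in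 W$ and an ordering $(i,j,k)$ of $\{1,2,3\}$ such that $\{w_1,w_2\},\{w_4,w_5\}$ are hyperedges of color $i$, $\{w_2,w_3\},\{w_5,w_6\}$ are hyperedges of color $j$, and $\{w_3,w_4\},\{w_6,w_1\}$ are hyperedges of color $k$. Rainbow $2$-$2$-triangle: distinct $w_1,w_2,w_3\in W$ and $\{i,j,k\}=\{1,2,3\}$ such that $\{w_1,w_2\}$ is a hyperedge of color $i$, $\{w_2,w_3\}$ is a hyperedge of color $j$, and $w_1,w_3$ (the termini) lie in a common hyperedge of color $k$. Shark teeth: two rainbow $2$-$2$-triangles with the same colors $i,j,k$ on disjoint vertex sets whose four termini all belong to the same poofy hyperedge of color $k$. *)

theory Defs
  imports Main "HOL-Library.Extended_Nat"
begin

type_synonym vtx = "nat \<times> nat \<times> nat"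

definition coord :: "vtx \<Rightarrow> nat \<Rightarrow> nat" where
  "coord x i = (if i = 1 then fst x else if i = 2 then fst (snd x) else snd (snd x))"

definition sz :: "nat \<Rightarrow> nat \<Rightarrow> nat \<Rightarrow> nat \<Rightarrow> nat" where
  "sz n1 n2 n3 i = (if i = 1 then n1 else if i = 2 then n2 else n3)"

definition Kverts :: "nat \<Rightarrow> nat \<Rightarrow> nat \<Rightarrow> vtx set" where
  "Kverts n1 n2 n3 = {x. \<forall>i\<in>{1,2,3}. 1 \<le> coord x i \<and> coord x i \<le> sz n1 n2 n3 i}"

text \<open>Adjacency in the direct product: differ in every coordinate.\<close>
definition Kadj :: "vtx \<Rightarrow> vtx \<Rightarrow> bool" where
  "Kadj x y = (\<forall>i\<in>{1,2,3}. coord x i \<noteq> coord y i)"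

definition Kedges :: "nat \<Rightarrow> nat \<Rightarrow> nat \<Rightarrow> vtx rel" where
  "Kedges n1 n2 n3 = {(x, y). x \<in> Kverts n1 n2 n3 \<and> y \<in> Kverts n1 n2 n3 \<and> Kadj x y}"

definition Kdist :: "nat \<Rightarrow> nat \<Rightarrow> nat \<Rightarrow> vtx \<Rightarrow> vtx \<Rightarrow> enat" where
  "Kdist n1 n2 n3 x y = Inf {enat k | k. (x, y) \<in> Kedges n1 n2 n3 ^^ k}"

definition resolving :: "nat \<Rightarrow> nat \<Rightarrow> nat \<Rightarrow> vtx set \<Rightarrow> bool" where
  "resolving n1 n2 n3 W \<longleftrightarrow> W \<subseteq> Kverts n1 n2 n3 \<and>
     (\<forall>x\<in>Kverts n1 n2 n3 - W. \<forall>y\<in>Kverts n1 n2 n3 - W. x \<noteq> y \<longrightarrow>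
        (\<exists>w\<in>W. Kdist n1 n2 n3 x w \<noteq> Kdist n1 n2 n3 y w))"

definition Wsl :: "vtx set \<Rightarrow> nat \<Rightarrow> nat \<Rightarrow> vtx set" where
  "Wsl W i a = {w \<in> W. coord w i = a}"

text \<open>S is a hyperedge of colour i of the landmark graph G(W).\<close>
definition hedge :: "vtx set \<Rightarrow> nat \<Rightarrow> vtx set \<Rightarrow> bool" where
  "hedge W i S \<longleftrightarrow> i \<in> {1,2,3} \<and> (\<exists>a. S = Wsl W i a) \<and> S \<noteq> {}"

definition poofy :: "vtx set \<Rightarrow> nat \<Rightarrow> vtx set \<Rightarrow> bool" where
  "poofy W i S \<longleftrightarrow> hedge W i S \<and> card S \<ge> 3"

definition common :: "vtx set \<Rightarrow> nat \<Rightarrow> vtx \<Rightarrow> vtx \<Rightarrow> bool" where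
  "common W i u v \<longleftrightarrow> (\<exists>S. hedge W i S \<and> u \<in> S \<and> v \<in> S)"

definition basic_landmark_system :: "nat \<Rightarrow> nat \<Rightarrow> nat \<Rightarrow> vtx set \<Rightarrow> bool" where
  "basic_landmark_system n1 n2 n3 W \<longleftrightarrow> W \<subseteq> Kverts n1 n2 n3 \<and>
     (\<forall>i\<in>{1,2,3}. \<forall>a\<in>{1..sz n1 n2 n3 i}. Wsl W i a \<noteq> {}) \<and>
     (\<forall>i\<in>{1,2,3}. \<forall>a\<in>{1..sz n1 n2 n3 i}. card (Wsl W i a) \<ge> 2) \<and>
     (\<forall>i\<in>{1,2,3}. \<forall>j\<in>{1,2,3}. \<forall>a b. i \<noteq> j \<longrightarrow> card (Wsl W i a \<inter> Wsl W j b) \<le> 1)"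

definition distinct_colours :: "nat \<Rightarrow> nat \<Rightarrow> nat \<Rightarrow> bool" where
  "distinct_colours i j k \<longleftrightarrow> {i, j, k} = {1, 2, 3}"

definition has_bad_4cycle :: "vtx set \<Rightarrow> bool" where
  "has_bad_4cycle W \<longleftrightarrow> (\<exists>w1 w2 w3 w4 i j k.
     w1 \<in> W \<and> w2 \<in> W \<and> w3 \<in> W \<and> w4 \<in> W \<and> distinct [w1, w2, w3, w4] \<and>
     distinct_colours i j k \<and>
     hedge W i {w1, w2} \<and> hedge W i {w3, w4} \<and>
     common W j w2 w3 \<and> common W k w4 w1)"

definition has_plain_hex :: "vtx set \<Rightarrow> bool" where
  "has_plain_hex W \<longleftrightarrow> (\<exists>w1 w2 w3 w4 w5 w6 i j k.
     w1 \<in> W \<and> w2 \<in> W \<and> w3 \<in> W \<and> w4 \<in> W \<and> w5 \<in> W \<and> w6 \<in> W \<and>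
     distinct [w1, w2, w3, w4, w5, w6] \<and> distinct_colours i j k \<and>
     hedge W i {w1, w2} \<and> hedge W i {w4, w5} \<and>
     hedge W j {w2, w3} \<and> hedge W j {w5, w6} \<and>
     hedge W k {w3, w4} \<and> hedge W k {w6, w1})"

definition rainbow_tri :: "vtx set \<Rightarrow> vtx \<Rightarrow> vtx \<Rightarrow> vtx \<Rightarrow> nat \<Rightarrow> nat \<Rightarrow> nat \<Rightarrow> bool" where
  "rainbow_tri W w1 w2 w3 i j k \<longleftrightarrow>
     w1 \<in> W \<and> w2 \<in> W \<and> w3 \<in> W \<and> distinct [w1, w2, w3] \<and> distinct_colours i j k \<and>
     hedge W i {w1, w2} \<and> hedge W j {w2, w3} \<and> common W k w1 w3"

definition has_shark_teeth :: "vtx set \<Rightarrow> bool" where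
  "has_shark_teeth W \<longleftrightarrow> (\<exists>u1 u2 u3 v1 v2 v3 i j k S.
     rainbow_tri W u1 u2 u3 i j k \<and> rainbow_tri W v1 v2 v3 i j k \<and>
     {u1, u2, u3} \<inter> {v1, v2, v3} = {} \<and>
     poofy W k S \<and> u1 \<in> S \<and> u3 \<in> S \<and> v1 \<in> S \<and> v3 \<in> S)"

end

theory Submission
  imports Defs
begin

lemma dc_facts:
  assumes "distinct_colours i j k"
  shows "i \<in> {1,2,3}" "j \<in> {1,2,3}" "k \<in> {1,2,3}" "i \<noteq> j" "i \<noteq> k" "j \<noteq> k"
proof -
  have e: "{i,j,k} = {1,2,3::nat}" using assms by (simp add: distinct_colours_def)
  show "i \<in> {1,2,3}" "j \<in> {1,2,3}" "k \<in> {1,2,3}" using e by blast+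
  have c: "card {i,j,k} = 3" using e by simp
  show "i \<noteq> j" proof assume "i = j" then have "card {i,j,k} \<le> 2" by (simp add: card_insert_le_m1) 
     with c show False by simp qed
  show "i \<noteq> k" proof assume "i = k" then have "{i,j,k} = {j,k}" by auto then have "card {i,j,k} \<le> 2" by (simp add: card_insert_if) 
     with c show False by simp qed
  show "j \<noteq> k" proof assume "j = k" then have "card {i,j,k} \<le> 2" by (simp add: card_insert_le_m1) 
     with c show False by simp qed
qed

lemma dc_all: "distinct_colours i j k \<Longrightarrow> l \<in> {1,2,3} \<Longrightarrow> l = i \<or> l = j \<or> l = k"
  unfolding distinct_colours_def by blast

lemma dc_perm: "distinct_colours i j k \<Longrightarrow> distinct_colours i k j"
  "distinct_colours i j k \<Longrightarrow> distinct_colours j i k"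
  unfolding distinct_colours_def by (simp_all add: insert_commute)

lemma dc_123: "distinct_colours 1 2 3" "distinct_colours 2 1 3" "distinct_colours 3 1 2"
  unfolding distinct_colours_def by (simp_all add: insert_commute)

lemma vtx_eq: "coord x 1 = coord y 1 \<Longrightarrow> coord x 2 = coord y 2 \<Longrightarrow> coord x 3 = coord y 3 \<Longrightarrow> x = y"
  unfolding coord_def by (simp add: prod_eq_iff)

lemma vtx_eq_dc: "distinct_colours i j k \<Longrightarrow> coord x i = coord y i \<Longrightarrow> coord x j = coord y j
   \<Longrightarrow> coord x k = coord y k \<Longrightarrow> x = y"
proof -
  assume dc: "distinct_colours i j k" and e: "coord x i = coord y i" "coord x j = coord y j" "coord x k = coord y k"
  have "coord x l = coord y l" if "l \<in> {1,2,3}" for l using dc_all[OF dc that] e by auto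
  then show "x = y" by (intro vtx_eq) auto
qed

definition mkv :: "(nat \<Rightarrow> nat) \<Rightarrow> vtx" where "mkv f = (f 1, f 2, f 3)"

lemma coord_mkv: "l \<in> {1,2,3} \<Longrightarrow> coord (mkv f) l = f l"
  unfolding mkv_def coord_def by auto

definition share :: "vtx \<Rightarrow> vtx \<Rightarrow> bool" where
  "share x w \<longleftrightarrow> (\<exists>l\<in>{1,2,3}. coord x l = coord w l)"

lemma share_dc: "distinct_colours i j k \<Longrightarrow> share x w \<longleftrightarrow>
   coord x i = coord w i \<or> coord x j = coord w j \<or> coord x k = coord w k"
  using dc_all[of i j k] dc_facts[of i j k] unfolding share_def by blast

lemma finite_Kverts: "finite (Kverts n1 n2 n3)"
proof -
  have "Kverts n1 n2 n3 \<subseteq> {1..n1} \<times> {1..n2} \<times> {1..n3}"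
    unfolding Kverts_def coord_def sz_def by auto
  then show ?thesis by (rule finite_subset) auto
qed

lemma Kverts_I: "(\<And>l. l \<in> {1,2,3::nat} \<Longrightarrow> \<exists>w\<in>Kverts n1 n2 n3. coord x l = coord w l) \<Longrightarrow> x \<in> Kverts n1 n2 n3"
  unfolding Kverts_def by fastforce

lemma card1_eq: "finite A \<Longrightarrow> card A \<le> 1 \<Longrightarrow> u \<in> A \<Longrightarrow> v \<in> A \<Longrightarrow> u = v"
  by (metis card_le_Suc0_iff_eq One_nat_def)

definition pick :: "nat \<Rightarrow> nat \<Rightarrow> nat" where
  "pick a b = (if 1 \<noteq> a \<and> 1 \<noteq> b then 1 else if 2 \<noteq> a \<and> 2 \<noteq> b then 2 else 3)"

lemma pick: "1 \<le> pick a b" "pick a b \<le> 3" "pick a b \<noteq> a" "pick a b \<noteq> b"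
  unfolding pick_def by auto

lemma pick': "a \<noteq> pick a b" "b \<noteq> pick a b"
  using pick(3,4) by metis+

lemma Kdist_val:
  assumes n: "3 \<le> n1" "3 \<le> n2" "3 \<le> n3"
    and x: "x \<in> Kverts n1 n2 n3" and w: "w \<in> Kverts n1 n2 n3" and xw: "x \<noteq> w"
  shows "Kdist n1 n2 n3 x w = (if Kadj x w then 1 else 2)"
proof -
  let ?E = "Kedges n1 n2 n3"
  let ?S = "{enat k | k. (x, w) \<in> ?E ^^ k}"
  have no0: "(x, w) \<notin> ?E ^^ 0" using xw by auto
  show ?thesis
  proof (cases "Kadj x w")
    case True
    then have "(x, w) \<in> ?E ^^ 1" using x w by (simp add: Kedges_def)
    then have "1 \<in> ?S" by (metis (mono_tags, lifting) mem_Collect_eq one_enat_def)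
    then have le: "Inf ?S \<le> 1" by (rule Inf_lower)
    have ge: "1 \<le> Inf ?S"
    proof (rule Inf_greatest)
      fix s assume "s \<in> ?S"
      then obtain k where "s = enat k" "(x, w) \<in> ?E ^^ k" by blast
      have "k \<noteq> 0" using \<open>(x, w) \<in> ?E ^^ k\<close> xw by (cases k) auto
      then show "1 \<le> s" using \<open>s = enat k\<close> by (simp add: one_enat_def)
    qed
    show ?thesis using le ge True by (simp add: Kdist_def)
  next
    case False
    define z where "z = mkv (\<lambda>l. pick (coord x l) (coord w l))"
    have cz: "coord z l = pick (coord x l) (coord w l)" if "l \<in> {1,2,3}" for l
      using that by (simp add: z_def coord_mkv)
    have zK: "z \<in> Kverts n1 n2 n3"
      unfolding Kverts_def using cz pick(1,2) n by (auto simp: sz_def intro: order.trans[OF pick(2)])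
    have "Kadj x z" "Kadj z w" unfolding Kadj_def using cz by (auto simp: pick pick')
    then have "(x, z) \<in> ?E" "(z, w) \<in> ?E" using x w zK by (auto simp: Kedges_def)
    then have "(x, w) \<in> ?E ^^ 2" by (simp add: numeral_2_eq_2 relcomp.relcompI del: prod.collapse)
    then have "2 \<in> ?S" by (metis (mono_tags, lifting) mem_Collect_eq numeral_eq_enat)
    then have le: "Inf ?S \<le> 2" by (rule Inf_lower)
    have ge: "2 \<le> Inf ?S"
    proof (rule Inf_greatest)
      fix s assume "s \<in> ?S"
      then obtain k where "s = enat k" "(x, w) \<in> ?E ^^ k" by blast
      moreover have "(x, w) \<notin> ?E ^^ 1" using False by (simp add: Kedges_def)
      ultimately have "k \<noteq> 0" "k \<noteq> 1" using xw by (cases k; auto)+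
      then show "2 \<le> s" using \<open>s = enat k\<close> by (simp add: numeral_eq_enat)
    qed
    show ?thesis using le ge False by (simp add: Kdist_def)
  qed
qed

lemma share_Kadj: "share x w \<longleftrightarrow> \<not> Kadj x w"
  unfolding share_def Kadj_def by blast

lemma resolving_share:
  assumes n: "3 \<le> n1" "3 \<le> n2" "3 \<le> n3" and WK: "W \<subseteq> Kverts n1 n2 n3"
  shows "resolving n1 n2 n3 W \<longleftrightarrow> (\<forall>x\<in>Kverts n1 n2 n3 - W. \<forall>y\<in>Kverts n1 n2 n3 - W. x \<noteq> y \<longrightarrow>
     (\<exists>w\<in>W. share x w \<noteq> share y w))"
proof -
  have d: "Kdist n1 n2 n3 x w = (if share x w then 2 else 1)" if "x \<in> Kverts n1 n2 n3 - W" "w \<in> W" for x w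
  proof -
    have "x \<noteq> w" "w \<in> Kverts n1 n2 n3" "x \<in> Kverts n1 n2 n3" using that WK by auto
    then show ?thesis using Kdist_val[OF n, of x w] by (simp add: share_Kadj)
  qed
  have "(Kdist n1 n2 n3 x w \<noteq> Kdist n1 n2 n3 y w) \<longleftrightarrow> (share x w \<noteq> share y w)"
    if "x \<in> Kverts n1 n2 n3 - W" "y \<in> Kverts n1 n2 n3 - W" "w \<in> W" for x y w
    using d[OF that(1,3)] d[OF that(2,3)] by (auto simp: numeral_eq_enat one_enat_def)
  then show ?thesis unfolding resolving_def using WK by auto
qed

lemma basic_WK: "basic_landmark_system n1 n2 n3 W \<Longrightarrow> W \<subseteq> Kverts n1 n2 n3"
  by (simp add: basic_landmark_system_def)

lemma basic_fin: "basic_landmark_system n1 n2 n3 W \<Longrightarrow> finite W"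
  by (rule finite_subset[OF basic_WK finite_Kverts])

lemma inter1:
  assumes b: "basic_landmark_system n1 n2 n3 W" and ij: "i \<in> {1,2,3}" "j \<in> {1,2,3}" "i \<noteq> j"
    and uv: "u \<in> W" "v \<in> W" "coord u i = coord v i" "coord u j = coord v j"
  shows "u = v"
proof -
  have all: "\<forall>i\<in>{1,2,3}. \<forall>j\<in>{1,2,3}. \<forall>a b. i \<noteq> j \<longrightarrow> card (Wsl W i a \<inter> Wsl W j b) \<le> 1"
    using b unfolding basic_landmark_system_def by (rule conjunct2[THEN conjunct2[THEN conjunct2]])
  have c: "card (Wsl W i (coord u i) \<inter> Wsl W j (coord u j)) \<le> 1"
    using all[rule_format, OF ij] .
  have f: "finite (Wsl W i (coord u i) \<inter> Wsl W j (coord u j))"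
    using basic_fin[OF b] unfolding Wsl_def by auto
  show ?thesis by (rule card1_eq[OF f c]) (use uv in \<open>auto simp: Wsl_def\<close>)
qed

lemma slice2:
  assumes b: "basic_landmark_system n1 n2 n3 W" and i: "i \<in> {1,2,3}" and x: "x \<in> Kverts n1 n2 n3"
  shows "2 \<le> card (Wsl W i (coord x i))"
proof -
  have "coord x i \<in> {1..sz n1 n2 n3 i}" using x i unfolding Kverts_def by auto
  moreover have all: "\<forall>i\<in>{1,2,3}. \<forall>a\<in>{1..sz n1 n2 n3 i}. card (Wsl W i a) \<ge> 2"
    using b unfolding basic_landmark_system_def by (rule conjunct2[THEN conjunct2[THEN conjunct1]])
  ultimately show ?thesis using i by blast
qed

lemma Wsl_mem[simp]: "w \<in> Wsl W i a \<longleftrightarrow> w \<in> W \<and> coord w i = a"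
  by (simp add: Wsl_def)

lemma hedge_pair: "hedge W i {p,q} \<Longrightarrow> Wsl W i (coord p i) = {p,q} \<and> i \<in> {1,2,3} \<and> p \<in> W \<and> q \<in> W"
proof -
  assume h: "hedge W i {p,q}"
  then obtain a where S: "{p,q} = Wsl W i a" and i: "i \<in> {1,2,3}" unfolding hedge_def by blast
  have "p \<in> Wsl W i a" "q \<in> Wsl W i a" using S by blast+
  then have "coord p i = a" "p \<in> W" "q \<in> W" by simp_all
  then show ?thesis using S i by simp
qed

lemma hedge_I: "i \<in> {1,2,3} \<Longrightarrow> Wsl W i a = {p,q} \<Longrightarrow> hedge W i {p,q}"
  unfolding hedge_def by auto

lemma common_D: "common W i u v \<Longrightarrow> u \<in> W \<and> v \<in> W \<and> coord u i = coord v i"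
  unfolding common_def hedge_def by auto

lemma common_I: "i \<in> {1,2,3} \<Longrightarrow> u \<in> W \<Longrightarrow> v \<in> W \<Longrightarrow> coord u i = coord v i \<Longrightarrow> common W i u v"
  unfolding common_def hedge_def by (rule exI[of _ "Wsl W i (coord u i)"]) auto

definition mk3 :: "nat \<Rightarrow> nat \<Rightarrow> nat \<Rightarrow> nat \<Rightarrow> nat \<Rightarrow> nat \<Rightarrow> vtx" where
  "mk3 i j k a b c = mkv (\<lambda>l. if l = i then a else if l = j then b else c)"

lemma coord_mk3:
  assumes "distinct_colours i j k"
  shows "coord (mk3 i j k a b c) i = a" "coord (mk3 i j k a b c) j = b" "coord (mk3 i j k a b c) k = c"
  using dc_facts[OF assms] by (auto simp: mk3_def coord_mkv)

lemma mk3_K: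
  assumes "distinct_colours i j k" "u \<in> Kverts n1 n2 n3" "v \<in> Kverts n1 n2 n3" "w \<in> Kverts n1 n2 n3"
  shows "mk3 i j k (coord u i) (coord v j) (coord w k) \<in> Kverts n1 n2 n3"
proof (rule Kverts_I)
  fix l :: nat assume l: "l \<in> {1,2,3}"
  note c = coord_mk3[OF assms(1), of "coord u i" "coord v j" "coord w k"]
  from dc_all[OF assms(1) l] show "\<exists>w'\<in>Kverts n1 n2 n3. coord (mk3 i j k (coord u i) (coord v j) (coord w k)) l = coord w' l"
  proof (elim disjE)
    assume "l = i" then show ?thesis using c assms(2) by blast
  next
    assume "l = j" then show ?thesis using c assms(3) by blast
  next
    assume "l = k" then show ?thesis using c assms(4) by blast
  qed
qed

definition twins :: "nat \<Rightarrow> nat \<Rightarrow> nat \<Rightarrow> vtx set \<Rightarrow> vtx \<Rightarrow> vtx \<Rightarrow> bool" where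
  "twins n1 n2 n3 W x y \<longleftrightarrow> x \<in> Kverts n1 n2 n3 - W \<and> y \<in> Kverts n1 n2 n3 - W \<and> x \<noteq> y \<and>
     (\<forall>w\<in>W. share x w = share y w)"

lemma bad_twins:
  assumes b: "basic_landmark_system n1 n2 n3 W" and h: "has_bad_4cycle W"
  shows "\<exists>x y. twins n1 n2 n3 W x y"
proof -
  from h show ?thesis unfolding has_bad_4cycle_def
  proof (elim exE conjE)
  fix w1 w2 w3 w4 i j k assume
    ws: "w1 \<in> W" "w2 \<in> W" "w3 \<in> W" "w4 \<in> W" and dis: "distinct [w1, w2, w3, w4]" and
    dc: "distinct_colours i j k" and
    h1: "hedge W i {w1, w2}" and h2: "hedge W i {w3, w4}" and
    c1: "common W j w2 w3" and c2: "common W k w4 w1"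
  note d = dc_facts[OF dc]
  have WK: "W \<subseteq> Kverts n1 n2 n3" using basic_WK[OF b] .
  define a where "a = coord w1 i"
  define a' where "a' = coord w3 i"
  define p where "p = coord w2 j"
  define q where "q = coord w1 k"
  have s1: "Wsl W i a = {w1, w2}" using hedge_pair[OF h1] a_def by simp
  have s2: "Wsl W i a' = {w3, w4}" using hedge_pair[OF h2] a'_def by simp
  have e3: "coord w3 j = p" using common_D[OF c1] p_def by simp
  have e4: "coord w4 k = q" using common_D[OF c2] q_def by simp
  have "w2 \<in> Wsl W i a" "w4 \<in> Wsl W i a'" using s1 s2 by auto
  then have e2i: "coord w2 i = a" and e4i: "coord w4 i = a'" by auto
  define x where "x = mk3 i j k a p q"
  define y where "y = mk3 i j k a' p q"
  have cx: "coord x i = a" "coord x j = p" "coord x k = q" using coord_mk3[OF dc] x_def by auto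
  have cy: "coord y i = a'" "coord y j = p" "coord y k = q" using coord_mk3[OF dc] y_def by auto
  have xK: "x \<in> Kverts n1 n2 n3" unfolding x_def a_def p_def q_def
    by (rule mk3_K[OF dc]) (use ws WK in auto)
  have yK: "y \<in> Kverts n1 n2 n3" unfolding y_def a'_def p_def q_def
    by (rule mk3_K[OF dc]) (use ws WK in auto)
  have aa: "a \<noteq> a'"
  proof
    assume "a = a'"
    then have "w3 \<in> Wsl W i a" using ws a'_def by simp
    then show False using s1 dis by auto
  qed
  have n12: "w1 \<noteq> w2" and n34: "w3 \<noteq> w4" using dis by auto
  have xW: "x \<notin> W"
  proof
    assume "x \<in> W"
    then have "x \<in> Wsl W i a" using cx by simp
    then have "x \<in> {w1, w2}" using s1 by simp
    then have "x = w1 \<or> x = w2" by simp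
    then show False
    proof
      assume "x = w1"
      then show False using inter1[OF b d(1,2,4) ws(1,2)] n12 cx e2i a_def p_def by auto
    next
      assume "x = w2"
      then show False using inter1[OF b d(1,3,5) ws(1,2)] n12 cx e2i a_def q_def by auto
    qed
  qed
  have yW: "y \<notin> W"
  proof
    assume "y \<in> W"
    then have "y \<in> Wsl W i a'" using cy by simp
    then have "y \<in> {w3, w4}" using s2 by simp
    then have "y = w3 \<or> y = w4" by simp
    then show False
    proof
      assume "y = w3"
      then show False using inter1[OF b d(1,3,5) ws(3,4)] n34 cy e4i e4 a'_def by auto
    next
      assume "y = w4"
      then show False using inter1[OF b d(1,2,4) ws(3,4)] n34 cy e4i e3 a'_def by auto
    qed
  qed
  have sh: "share x w = share y w" if w: "w \<in> W" for w
  proof -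
    have "share x w \<longleftrightarrow> coord w j = p \<or> coord w k = q"
    proof -
      have "coord w j = p \<or> coord w k = q" if "coord w i = a"
      proof -
        have "w \<in> Wsl W i a" using w that by simp
        then have "w = w1 \<or> w = w2" using s1 by simp
        then show ?thesis using q_def p_def by auto
      qed
      then show ?thesis using share_dc[OF dc, of x w] cx by auto
    qed
    moreover have "share y w \<longleftrightarrow> coord w j = p \<or> coord w k = q"
    proof -
      have "coord w j = p \<or> coord w k = q" if "coord w i = a'"
      proof -
        have "w \<in> Wsl W i a'" using w that by simp
        then have "w = w3 \<or> w = w4" using s2 by simp
        then show ?thesis using e3 e4 by auto
      qed
      then show ?thesis using share_dc[OF dc, of y w] cy by auto
    qed
    ultimately show ?thesis by simp
  qed
  have "x \<noteq> y" using cx cy aa by auto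
  then show ?thesis unfolding twins_def using xK yK xW yW sh by blast
  qed
qed


lemma share_mk3: "distinct_colours i j k \<Longrightarrow>
   share (mk3 i j k a b c) w \<longleftrightarrow> coord w i = a \<or> coord w j = b \<or> coord w k = c"
  using share_dc[of i j k "mk3 i j k a b c" w] coord_mk3[of i j k a b c] by auto

lemma slice_iff: "Wsl W i a = S \<Longrightarrow> w \<in> W \<Longrightarrow> (coord w i = a \<longleftrightarrow> w \<in> S)"
proof -
  assume e: "Wsl W i a = S" and w: "w \<in> W"
  have "w \<in> Wsl W i a \<longleftrightarrow> w \<in> S" using e by (simp del: Wsl_mem)
  then show ?thesis using w by simp
qed

lemma hex_twins:
  assumes b: "basic_landmark_system n1 n2 n3 W" and h: "has_plain_hex W"
  shows "\<exists>x y. twins n1 n2 n3 W x y"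
  using h unfolding has_plain_hex_def
proof (elim exE conjE)
  fix w1 w2 w3 w4 w5 w6 i j k assume
    ws: "w1 \<in> W" "w2 \<in> W" "w3 \<in> W" "w4 \<in> W" "w5 \<in> W" "w6 \<in> W" and
    dis: "distinct [w1, w2, w3, w4, w5, w6]" and dc: "distinct_colours i j k" and
    h1: "hedge W i {w1, w2}" and h4: "hedge W i {w4, w5}" and
    h2: "hedge W j {w2, w3}" and h5: "hedge W j {w5, w6}" and
    h3: "hedge W k {w3, w4}" and h6: "hedge W k {w6, w1}"
  note d = dc_facts[OF dc]
  have WK: "W \<subseteq> Kverts n1 n2 n3" using basic_WK[OF b] .
  define a where "a = coord w1 i"
  define a' where "a' = coord w4 i"
  define bb where "bb = coord w2 j"
  define bb' where "bb' = coord w5 j"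
  define c where "c = coord w3 k"
  define c' where "c' = coord w6 k"
  have s1: "Wsl W i a = {w1, w2}" using hedge_pair[OF h1] a_def by simp
  have s4: "Wsl W i a' = {w4, w5}" using hedge_pair[OF h4] a'_def by simp
  have s2: "Wsl W j bb = {w2, w3}" using hedge_pair[OF h2] bb_def by simp
  have s5: "Wsl W j bb' = {w5, w6}" using hedge_pair[OF h5] bb'_def by simp
  have s3: "Wsl W k c = {w3, w4}" using hedge_pair[OF h3] c_def by simp
  have s6: "Wsl W k c' = {w6, w1}" using hedge_pair[OF h6] c'_def by simp
  define x where "x = mk3 i j k a bb' c"
  define y where "y = mk3 i j k a' bb c'"
  have cx: "coord x i = a" "coord x j = bb'" "coord x k = c" using coord_mk3[OF dc] x_def by auto
  have cy: "coord y i = a'" "coord y j = bb" "coord y k = c'" using coord_mk3[OF dc] y_def by auto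
  have xK: "x \<in> Kverts n1 n2 n3" unfolding x_def a_def bb'_def c_def
    by (rule mk3_K[OF dc]) (use ws WK in auto)
  have yK: "y \<in> Kverts n1 n2 n3" unfolding y_def a'_def bb_def c'_def
    by (rule mk3_K[OF dc]) (use ws WK in auto)
  have sx: "share x w \<longleftrightarrow> w \<in> {w1,w2,w3,w4,w5,w6}" if w: "w \<in> W" for w
    using share_mk3[OF dc, of a bb' c w] slice_iff[OF s1 w] slice_iff[OF s5 w] slice_iff[OF s3 w]
    unfolding x_def by auto
  have sy: "share y w \<longleftrightarrow> w \<in> {w1,w2,w3,w4,w5,w6}" if w: "w \<in> W" for w
    using share_mk3[OF dc, of a' bb c' w] slice_iff[OF s4 w] slice_iff[OF s2 w] slice_iff[OF s6 w]
    unfolding y_def by auto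
  have xW: "x \<notin> W"
  proof
    assume xw: "x \<in> W"
    have "x \<in> {w1, w2}" using slice_iff[OF s1 xw] cx by simp
    moreover have "x \<in> {w5, w6}" using slice_iff[OF s5 xw] cx by simp
    ultimately show False using dis by auto
  qed
  have yW: "y \<notin> W"
  proof
    assume yw: "y \<in> W"
    have "y \<in> {w4, w5}" using slice_iff[OF s4 yw] cy by simp
    moreover have "y \<in> {w2, w3}" using slice_iff[OF s2 yw] cy by simp
    ultimately show False using dis by auto
  qed
  have aa: "a \<noteq> a'"
  proof
    assume "a = a'"
    then have "w4 \<in> {w1, w2}" using slice_iff[OF s1 ws(4)] a'_def by simp
    then show False using dis by auto
  qed
  have "x \<noteq> y" using cx cy aa by auto
  then show "\<exists>x y. twins n1 n2 n3 W x y" unfolding twins_def using xK yK xW yW sx sy by blast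
qed

lemma shark_twins:
  assumes b: "basic_landmark_system n1 n2 n3 W" and h: "has_shark_teeth W"
  shows "\<exists>x y. twins n1 n2 n3 W x y"
  using h unfolding has_shark_teeth_def
proof (elim exE conjE)
  fix u1 u2 u3 v1 v2 v3 i j k S assume
    ru: "rainbow_tri W u1 u2 u3 i j k" and rv: "rainbow_tri W v1 v2 v3 i j k" and
    dj: "{u1, u2, u3} \<inter> {v1, v2, v3} = {}" and
    pS: "poofy W k S" and m: "u1 \<in> S" "u3 \<in> S" "v1 \<in> S" "v3 \<in> S"
  have us: "u1 \<in> W" "u2 \<in> W" "u3 \<in> W" and dc: "distinct_colours i j k" and
    hu1: "hedge W i {u1, u2}" and hu2: "hedge W j {u2, u3}"
    using ru unfolding rainbow_tri_def by auto
  have vs: "v1 \<in> W" "v2 \<in> W" "v3 \<in> W" and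
    hv1: "hedge W i {v1, v2}" and hv2: "hedge W j {v2, v3}"
    using rv unfolding rainbow_tri_def by auto
  have WK: "W \<subseteq> Kverts n1 n2 n3" using basic_WK[OF b] .
  obtain c where Sc: "S = Wsl W k c" using pS unfolding poofy_def hedge_def by blast
  have cc: "c = coord u1 k" using m(1) Sc by simp
  define a where "a = coord u1 i"
  define a' where "a' = coord v1 i"
  define bb where "bb = coord u2 j"
  define bb' where "bb' = coord v2 j"
  have s1: "Wsl W i a = {u1, u2}" using hedge_pair[OF hu1] a_def by simp
  have s4: "Wsl W i a' = {v1, v2}" using hedge_pair[OF hv1] a'_def by simp
  have s2: "Wsl W j bb = {u2, u3}" using hedge_pair[OF hu2] bb_def by simp
  have s5: "Wsl W j bb' = {v2, v3}" using hedge_pair[OF hv2] bb'_def by simp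
  have s3: "Wsl W k c = S" using Sc by simp
  define x where "x = mk3 i j k a bb' c"
  define y where "y = mk3 i j k a' bb c"
  have cx: "coord x i = a" "coord x j = bb'" "coord x k = c" using coord_mk3[OF dc] x_def by auto
  have cy: "coord y i = a'" "coord y j = bb" "coord y k = c" using coord_mk3[OF dc] y_def by auto
  have xK: "x \<in> Kverts n1 n2 n3" unfolding x_def a_def bb'_def cc
    by (rule mk3_K[OF dc]) (use us vs WK in auto)
  have yK: "y \<in> Kverts n1 n2 n3" unfolding y_def a'_def bb_def cc
    by (rule mk3_K[OF dc]) (use us vs WK in auto)
  have sx: "share x w \<longleftrightarrow> w \<in> S \<or> w = u2 \<or> w = v2" if w: "w \<in> W" for w
    using share_mk3[OF dc, of a bb' c w] slice_iff[OF s1 w] slice_iff[OF s5 w] slice_iff[OF s3 w] m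
    unfolding x_def by auto
  have sy: "share y w \<longleftrightarrow> w \<in> S \<or> w = u2 \<or> w = v2" if w: "w \<in> W" for w
    using share_mk3[OF dc, of a' bb c w] slice_iff[OF s4 w] slice_iff[OF s2 w] slice_iff[OF s3 w] m
    unfolding y_def by auto
  have xW: "x \<notin> W"
  proof
    assume xw: "x \<in> W"
    have "x \<in> {u1, u2}" using slice_iff[OF s1 xw] cx by simp
    moreover have "x \<in> {v2, v3}" using slice_iff[OF s5 xw] cx by simp
    ultimately show False using dj by auto
  qed
  have yW: "y \<notin> W"
  proof
    assume yw: "y \<in> W"
    have "y \<in> {v1, v2}" using slice_iff[OF s4 yw] cy by simp
    moreover have "y \<in> {u2, u3}" using slice_iff[OF s2 yw] cy by simp
    ultimately show False using dj by auto
  qed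
  have aa: "a \<noteq> a'"
  proof
    assume "a = a'"
    then have "v1 \<in> {u1, u2}" using slice_iff[OF s1 vs(1)] a'_def by simp
    then show False using dj by auto
  qed
  have "x \<noteq> y" using cx cy aa by auto
  then show "\<exists>x y. twins n1 n2 n3 W x y" unfolding twins_def using xK yK xW yW sx sy by blast
qed


lemma twins_sym: "twins n1 n2 n3 W x y \<Longrightarrow> twins n1 n2 n3 W y x"
  unfolding twins_def by auto

lemma two_elems: "finite A \<Longrightarrow> 2 \<le> card A \<Longrightarrow> \<exists>w\<in>A. \<exists>w'\<in>A. w \<noteq> w'"
  using card_le_Suc0_iff_eq[of A] by auto

lemma stick:
  assumes b: "basic_landmark_system n1 n2 n3 W" and dc: "distinct_colours i j k"
    and tw: "twins n1 n2 n3 W x y" and dx: "coord x i \<noteq> coord y i"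
  shows "\<exists>p q. Wsl W i (coord x i) = {p, q} \<and> p \<noteq> q \<and> p \<in> W \<and> q \<in> W \<and>
     coord p i = coord x i \<and> coord q i = coord x i \<and> coord p j = coord y j \<and> coord q k = coord y k"
proof -
  note d = dc_facts[OF dc]
  define A where "A = Wsl W i (coord x i)"
  have xK: "x \<in> Kverts n1 n2 n3" and xy: "\<forall>w\<in>W. share x w = share y w" using tw unfolding twins_def by auto
  have fA: "finite A" unfolding A_def Wsl_def using basic_fin[OF b] by simp
  have cA: "2 \<le> card A" unfolding A_def by (rule slice2[OF b d(1) xK])
  have memA: "z \<in> A \<longleftrightarrow> z \<in> W \<and> coord z i = coord x i" for z unfolding A_def by simp
  have cls: "coord z j = coord y j \<or> coord z k = coord y k" if z: "z \<in> A" for z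
  proof -
    have zW: "z \<in> W" and zi: "coord z i = coord x i" using z memA by auto
    have "share x z" using share_dc[OF dc, of x z] zi by simp
    then have "share y z" using xy zW by simp
    then show ?thesis using share_dc[OF dc, of y z] zi dx by auto
  qed
  have uJ: "z = z'" if "z \<in> A" "z' \<in> A" "coord z j = coord y j" "coord z' j = coord y j" for z z'
    using inter1[OF b d(1,2,4), of z z'] that memA by auto
  have uK: "z = z'" if "z \<in> A" "z' \<in> A" "coord z k = coord y k" "coord z' k = coord y k" for z z'
    using inter1[OF b d(1,3,5), of z z'] that memA by auto
  obtain w w' where w: "w \<in> A" "w' \<in> A" "w \<noteq> w'" using two_elems[OF fA cA] by blast
  obtain p q where pq: "p \<in> A" "q \<in> A" "p \<noteq> q" "coord p j = coord y j" "coord q k = coord y k"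
  proof (cases "coord w j = coord y j")
    case True
    then have "coord w' j \<noteq> coord y j" using uJ[OF w(1) w(2) True] w(3) by blast
    then have "coord w' k = coord y k" using cls[OF w(2)] by blast
    then show ?thesis using that[of w w'] True w by blast
  next
    case False
    then have wk: "coord w k = coord y k" using cls[OF w(1)] by blast
    then have "coord w' k \<noteq> coord y k" using uK[OF w(1) w(2) wk] w(3) by blast
    then have "coord w' j = coord y j" using cls[OF w(2)] by blast
    then show ?thesis using that[of w' w] wk w by blast
  qed
  have "A = {p, q}"
  proof
    show "A \<subseteq> {p, q}"
    proof
      fix z assume z: "z \<in> A"
      show "z \<in> {p, q}"
      proof (cases "coord z j = coord y j")
        case True then show ?thesis using uJ[OF z pq(1)] pq by simp
      next
        case False then have "coord z k = coord y k" using cls z by blast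
        then show ?thesis using uK[OF z pq(2)] pq by simp
      qed
    qed
  next
    show "{p, q} \<subseteq> A" using pq by simp
  qed
  then have e: "Wsl W i (coord x i) = {p, q}" unfolding A_def .
  have "p \<in> W" "coord p i = coord x i" "q \<in> W" "coord q i = coord x i"
    using memA[of p] memA[of q] pq(1,2) by auto
  then show ?thesis using e pq(3,4,5) by blast
qed

lemma case1:
  assumes b: "basic_landmark_system n1 n2 n3 W" and dc: "distinct_colours i j k"
    and tw: "twins n1 n2 n3 W x y" and di: "coord x i \<noteq> coord y i"
    and ej: "coord x j = coord y j" and ek: "coord x k = coord y k"
  shows "has_bad_4cycle W"
proof -
  note d = dc_facts[OF dc]
  obtain p q where pq: "Wsl W i (coord x i) = {p, q}" "p \<noteq> q" "p \<in> W" "q \<in> W"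
     "coord p i = coord x i" "coord q i = coord x i" "coord p j = coord y j" "coord q k = coord y k"
    using stick[OF b dc tw di] by blast
  obtain p' q' where pq': "Wsl W i (coord y i) = {p', q'}" "p' \<noteq> q'" "p' \<in> W" "q' \<in> W"
     "coord p' i = coord y i" "coord q' i = coord y i" "coord p' j = coord x j" "coord q' k = coord x k"
    using stick[OF b dc twins_sym[OF tw] di[symmetric]] by blast
  have h1: "hedge W i {p, q}" by (rule hedge_I[OF d(1) pq(1)])
  have "Wsl W i (coord y i) = {q', p'}" using pq'(1) by auto
  then have h2: "hedge W i {q', p'}" by (rule hedge_I[OF d(1)])
  have c1: "common W k q q'" by (rule common_I[OF d(3) pq(4) pq'(4)]) (simp add: pq(8) pq'(8) ek)
  have c2: "common W j p' p" by (rule common_I[OF d(2) pq'(3) pq(3)]) (simp add: pq(7) pq'(7) ej)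
  have dis: "distinct [p, q, q', p']" using pq pq' di by auto
  show ?thesis unfolding has_bad_4cycle_def
    apply (rule exI[of _ p], rule exI[of _ q], rule exI[of _ q'], rule exI[of _ p'])
    apply (rule exI[of _ i], rule exI[of _ k], rule exI[of _ j])
    using pq(3,4) pq'(3,4) dis dc_perm(1)[OF dc] h1 h2 c1 c2 by blast
qed


lemma neqc: "coord u l \<noteq> coord v l \<Longrightarrow> u \<noteq> v"
  by auto

lemma case2:
  assumes b: "basic_landmark_system n1 n2 n3 W" and dc: "distinct_colours i j k"
    and tw: "twins n1 n2 n3 W x y" and di: "coord x i \<noteq> coord y i"
    and dj: "coord x j \<noteq> coord y j" and ek: "coord x k = coord y k"
  shows "has_shark_teeth W"
proof -
  note d = dc_facts[OF dc]
  note dc' = dc_perm(2)[OF dc]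
  have xW: "x \<notin> W" and yW: "y \<notin> W" using tw unfolding twins_def by auto
  obtain p1 q1 where A: "Wsl W i (coord x i) = {p1, q1}" "p1 \<noteq> q1" "p1 \<in> W" "q1 \<in> W"
     "coord p1 i = coord x i" "coord q1 i = coord x i" "coord p1 j = coord y j" "coord q1 k = coord y k"
    using stick[OF b dc tw di] by blast
  obtain p2 q2 where B: "Wsl W j (coord y j) = {p2, q2}" "p2 \<noteq> q2" "p2 \<in> W" "q2 \<in> W"
     "coord p2 j = coord y j" "coord q2 j = coord y j" "coord p2 i = coord x i" "coord q2 k = coord x k"
    using stick[OF b dc' twins_sym[OF tw] dj[symmetric]] by blast
  obtain p3 q3 where C: "Wsl W i (coord y i) = {p3, q3}" "p3 \<noteq> q3" "p3 \<in> W" "q3 \<in> W"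
     "coord p3 i = coord y i" "coord q3 i = coord y i" "coord p3 j = coord x j" "coord q3 k = coord x k"
    using stick[OF b dc twins_sym[OF tw] di[symmetric]] by blast
  obtain p4 q4 where D: "Wsl W j (coord x j) = {p4, q4}" "p4 \<noteq> q4" "p4 \<in> W" "q4 \<in> W"
     "coord p4 j = coord x j" "coord q4 j = coord x j" "coord p4 i = coord y i" "coord q4 k = coord y k"
    using stick[OF b dc' tw dj] by blast
  have p21: "p2 = p1" using inter1[OF b d(1,2,4) B(3) A(3)] A B by simp
  have p43: "p4 = p3" using inter1[OF b d(1,2,4) D(3) C(3)] C D by simp
  have q1j: "coord q1 j \<noteq> coord y j"
  proof
    assume "coord q1 j = coord y j"
    then have "q1 = p1" using inter1[OF b d(1,2,4) A(4) A(3)] A by simp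
    then show False using A(2) by simp
  qed
  have q3j: "coord q3 j \<noteq> coord x j"
  proof
    assume "coord q3 j = coord x j"
    then have "q3 = p3" using inter1[OF b d(1,2,4) C(4) C(3)] C by simp
    then show False using C(2) by simp
  qed
  have q1q2: "q1 \<noteq> q2" using q1j B(6) by auto
  have q3q4: "q3 \<noteq> q4" using q3j D(6) by auto
  have q1q4: "q1 \<noteq> q4"
  proof
    assume e: "q1 = q4"
    have "q1 = x" by (rule vtx_eq_dc[OF dc]) (use A D e ek in auto)
    then show False using A(4) xW by simp
  qed
  have q2q3: "q2 \<noteq> q3"
  proof
    assume e: "q2 = q3"
    have "q2 = y" by (rule vtx_eq_dc[OF dc]) (use B C e ek in auto)
    then show False using B(4) yW by simp
  qed
  define S where "S = Wsl W k (coord y k)"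
  have mS: "q1 \<in> S" "q2 \<in> S" "q3 \<in> S" "q4 \<in> S" unfolding S_def using A B C D ek by auto
  have fS: "finite S" unfolding S_def Wsl_def using basic_fin[OF b] by simp
  have q1q3: "q1 \<noteq> q3" using A(6) C(6) di by (intro neqc[of _ i]) simp
  have "card {q1, q2, q3} = 3" using q1q2 q1q3 q2q3 by simp
  moreover have "card {q1, q2, q3} \<le> card S" using mS fS by (intro card_mono) auto
  ultimately have "3 \<le> card S" by simp
  moreover have "hedge W k S" unfolding hedge_def S_def using d(3) mS(1) S_def by blast
  ultimately have pS: "poofy W k S" unfolding poofy_def by simp
  have ru: "rainbow_tri W q1 p1 q2 i j k" unfolding rainbow_tri_def
  proof (intro conjI)
    show "distinct [q1, p1, q2]" using A(2) B(2) p21 q1q2 by auto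
    show "hedge W i {q1, p1}" using hedge_I[OF d(1) A(1)] by (simp add: insert_commute)
    show "hedge W j {p1, q2}" using hedge_I[OF d(2) B(1)] p21 by simp
    show "common W k q1 q2" by (rule common_I[OF d(3) A(4) B(4)]) (simp add: A(8) B(8) ek)
  qed (use A B dc in auto)
  have rv: "rainbow_tri W q3 p3 q4 i j k" unfolding rainbow_tri_def
  proof (intro conjI)
    show "distinct [q3, p3, q4]" using C(2) D(2) p43 q3q4 by auto
    show "hedge W i {q3, p3}" using hedge_I[OF d(1) C(1)] by (simp add: insert_commute)
    show "hedge W j {p3, q4}" using hedge_I[OF d(2) D(1)] p43 by simp
    show "common W k q3 q4" by (rule common_I[OF d(3) C(4) D(4)]) (simp add: C(8) D(8) ek)
  qed (use C D dc in auto)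
  have dj1: "q1 \<noteq> p3" using A(6) C(5) di by (intro neqc[of _ i]) simp
  have dj2: "p1 \<noteq> q3" using A(5) C(6) di by (intro neqc[of _ i]) simp
  have dj3: "p1 \<noteq> p3" using A(5) C(5) di by (intro neqc[of _ i]) simp
  have dj4: "p1 \<noteq> q4" using A(7) D(6) dj by (intro neqc[of _ j]) simp
  have dj5: "q2 \<noteq> p3" using B(6) C(7) dj by (intro neqc[of _ j]) simp
  have dj6: "q2 \<noteq> q4" using B(6) D(6) dj by (intro neqc[of _ j]) simp
  have dis: "{q1, p1, q2} \<inter> {q3, p3, q4} = {}"
    using q1q3 q1q4 q2q3 dj1 dj2 dj3 dj4 dj5 dj6 by auto
  show ?thesis unfolding has_shark_teeth_def
    apply (rule exI[of _ q1], rule exI[of _ p1], rule exI[of _ q2])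
    apply (rule exI[of _ q3], rule exI[of _ p3], rule exI[of _ q4])
    apply (rule exI[of _ i], rule exI[of _ j], rule exI[of _ k], rule exI[of _ S])
    using ru rv dis pS mS by blast
qed


lemma case3:
  assumes b: "basic_landmark_system n1 n2 n3 W" and dc: "distinct_colours i j k"
    and tw: "twins n1 n2 n3 W x y" and di: "coord x i \<noteq> coord y i"
    and dj: "coord x j \<noteq> coord y j" and dk: "coord x k \<noteq> coord y k"
  shows "has_plain_hex W"
proof -
  note d = dc_facts[OF dc]
  note dc' = dc_perm(2)[OF dc]
  note dc'' = dc_perm(2)[OF dc_perm(1)[OF dc]]
  note tw' = twins_sym[OF tw]
  obtain a1 b1 where S1: "Wsl W i (coord x i) = {a1, b1}" "a1 \<noteq> b1" "a1 \<in> W" "b1 \<in> W"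
     "coord a1 i = coord x i" "coord b1 i = coord x i" "coord a1 j = coord y j" "coord b1 k = coord y k"
    using stick[OF b dc tw di] by blast
  obtain a2 b2 where S2: "Wsl W j (coord x j) = {a2, b2}" "a2 \<noteq> b2" "a2 \<in> W" "b2 \<in> W"
     "coord a2 j = coord x j" "coord b2 j = coord x j" "coord a2 i = coord y i" "coord b2 k = coord y k"
    using stick[OF b dc' tw dj] by blast
  obtain a3 b3 where S3: "Wsl W k (coord x k) = {a3, b3}" "a3 \<noteq> b3" "a3 \<in> W" "b3 \<in> W"
     "coord a3 k = coord x k" "coord b3 k = coord x k" "coord a3 i = coord y i" "coord b3 j = coord y j"
    using stick[OF b dc'' tw dk] by blast
  obtain c1 d1 where T1: "Wsl W i (coord y i) = {c1, d1}" "c1 \<noteq> d1" "c1 \<in> W" "d1 \<in> W"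
     "coord c1 i = coord y i" "coord d1 i = coord y i" "coord c1 j = coord x j" "coord d1 k = coord x k"
    using stick[OF b dc tw' di[symmetric]] by blast
  obtain c2 d2 where T2: "Wsl W j (coord y j) = {c2, d2}" "c2 \<noteq> d2" "c2 \<in> W" "d2 \<in> W"
     "coord c2 j = coord y j" "coord d2 j = coord y j" "coord c2 i = coord x i" "coord d2 k = coord x k"
    using stick[OF b dc' tw' dj[symmetric]] by blast
  obtain c3 d3 where T3: "Wsl W k (coord y k) = {c3, d3}" "c3 \<noteq> d3" "c3 \<in> W" "d3 \<in> W"
     "coord c3 k = coord y k" "coord d3 k = coord y k" "coord c3 i = coord x i" "coord d3 j = coord x j"
    using stick[OF b dc'' tw' dk[symmetric]] by blast
  have c1a2: "c1 = a2" using inter1[OF b d(1,2,4) T1(3) S2(3)] T1 S2 by simp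
  have d1a3: "d1 = a3" using inter1[OF b d(1,3,5) T1(4) S3(3)] T1 S3 by simp
  have c2a1: "c2 = a1" using inter1[OF b d(1,2,4) T2(3) S1(3)] T2 S1 by simp
  have d2b3: "d2 = b3" using inter1[OF b d(2,3,6) T2(4) S3(4)] T2 S3 by simp
  have c3b1: "c3 = b1" using inter1[OF b d(1,3,5) T3(3) S1(4)] T3 S1 by simp
  have d3b2: "d3 = b2" using inter1[OF b d(2,3,6) T3(4) S2(4)] T3 S2 by simp
  have h1: "hedge W i {b1, a1}" using hedge_I[OF d(1) S1(1)] by (simp add: insert_commute)
  have h2: "hedge W j {a1, b3}" using hedge_I[OF d(2) T2(1)] c2a1 d2b3 by simp
  have h3: "hedge W k {b3, a3}" using hedge_I[OF d(3) S3(1)] by (simp add: insert_commute)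
  have h4: "hedge W i {a3, a2}" using hedge_I[OF d(1) T1(1)] c1a2 d1a3 by (simp add: insert_commute)
  have h5: "hedge W j {a2, b2}" using hedge_I[OF d(2) S2(1)] by simp
  have h6: "hedge W k {b2, b1}" using hedge_I[OF d(3) T3(1)] c3b1 d3b2 by (simp add: insert_commute)
  have n1: "b1 \<noteq> b3" using S1(8) S3(6) dk by (intro neqc[of _ k]) simp
  have n2: "b1 \<noteq> a3" using S1(6) S3(7) di by (intro neqc[of _ i]) simp
  have n3: "b1 \<noteq> a2" using S1(6) S2(7) di by (intro neqc[of _ i]) simp
  have n4: "b1 \<noteq> b2" using T3(2) c3b1 d3b2 by simp
  have n5: "a1 \<noteq> b3" using T2(2) c2a1 d2b3 by simp
  have n6: "a1 \<noteq> a3" using S1(5) S3(7) di by (intro neqc[of _ i]) simp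
  have n7: "a1 \<noteq> a2" using S1(5) S2(7) di by (intro neqc[of _ i]) simp
  have n8: "a1 \<noteq> b2" using S1(7) S2(6) dj by (intro neqc[of _ j]) simp
  have n9: "b3 \<noteq> a2" using S3(8) S2(5) dj by (intro neqc[of _ j]) simp
  have n10: "b3 \<noteq> b2" using S3(8) S2(6) dj by (intro neqc[of _ j]) simp
  have n11: "a3 \<noteq> a2" using T1(2) c1a2 d1a3 by simp
  have n12: "a3 \<noteq> b2" using S3(5) S2(8) dk by (intro neqc[of _ k]) simp
  have dis: "distinct [b1, a1, b3, a3, a2, b2]"
    using n1 n2 n3 n4 n5 n6 n7 n8 n9 n10 n11 n12 S1(2) S2(2) S3(2) by auto
  show ?thesis unfolding has_plain_hex_def
    apply (rule exI[of _ b1], rule exI[of _ a1], rule exI[of _ b3])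
    apply (rule exI[of _ a3], rule exI[of _ a2], rule exI[of _ b2])
    apply (rule exI[of _ i], rule exI[of _ j], rule exI[of _ k])
    using S1 S2 S3 dis dc h1 h2 h3 h4 h5 h6 by blast
qed


lemma twins_struct:
  assumes b: "basic_landmark_system n1 n2 n3 W" and tw: "twins n1 n2 n3 W x y"
  shows "has_bad_4cycle W \<or> has_plain_hex W \<or> has_shark_teeth W"
proof -
  have xy: "x \<noteq> y" using tw unfolding twins_def by auto
  have dc132: "distinct_colours 1 3 2" by (rule dc_perm(1)[OF dc_123(1)])
  have dc231: "distinct_colours 2 3 1" by (rule dc_perm(1)[OF dc_123(2)])
  show ?thesis
  proof (cases "coord x 1 = coord y 1")
    case e1: True
    show ?thesis
    proof (cases "coord x 2 = coord y 2")
      case e2: True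
      then have "coord x 3 \<noteq> coord y 3" using e1 xy vtx_eq by blast
      then show ?thesis using case1[OF b dc_123(3) tw _ e1 e2] by blast
    next
      case n2: False
      show ?thesis
      proof (cases "coord x 3 = coord y 3")
        case True then show ?thesis using case1[OF b dc_123(2) tw n2 e1 True] by blast
      next
        case False then show ?thesis using case2[OF b dc231 tw n2 False e1] by blast
      qed
    qed
  next
    case n1: False
    show ?thesis
    proof (cases "coord x 2 = coord y 2")
      case e2: True
      show ?thesis
      proof (cases "coord x 3 = coord y 3")
        case True then show ?thesis using case1[OF b dc_123(1) tw n1 e2 True] by blast
      next
        case False then show ?thesis using case2[OF b dc132 tw n1 False e2] by blast
      qed
    next
      case n2: False
      show ?thesis
      proof (cases "coord x 3 = coord y 3")
        case True then show ?thesis using case2[OF b dc_123(1) tw n1 n2 True] by blast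
      next
        case False then show ?thesis using case3[OF b dc_123(1) tw n1 n2 False] by blast
      qed
    qed
  qed
qed

theorem mainTheorem2:
  fixes n1 n2 n3 :: nat and W :: "vtx set"
  assumes "3 \<le> n1" and "3 \<le> n2" and "n1 \<le> n3" and "n2 \<le> n3"
    and "basic_landmark_system n1 n2 n3 W"
  shows "resolving n1 n2 n3 W \<longleftrightarrow>
    \<not> has_bad_4cycle W \<and> \<not> has_plain_hex W \<and> \<not> has_shark_teeth W"
proof -
  note b = assms(5)
  have n3: "3 \<le> n3" using assms(1,3) by simp
  have r: "resolving n1 n2 n3 W \<longleftrightarrow> \<not> (\<exists>x y. twins n1 n2 n3 W x y)"
    unfolding resolving_share[OF assms(1,2) n3 basic_WK[OF b]] twins_def by blast
  show ?thesis
  proof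
    assume "resolving n1 n2 n3 W"
    then have nt: "\<not> (\<exists>x y. twins n1 n2 n3 W x y)" using r by simp
    show "\<not> has_bad_4cycle W \<and> \<not> has_plain_hex W \<and> \<not> has_shark_teeth W"
      using nt bad_twins[OF b] hex_twins[OF b] shark_twins[OF b] by blast
  next
    assume s: "\<not> has_bad_4cycle W \<and> \<not> has_plain_hex W \<and> \<not> has_shark_teeth W"
    have "\<not> (\<exists>x y. twins n1 n2 n3 W x y)" using s twins_struct[OF b] by blast
    then show "resolving n1 n2 n3 W" using r by simp
  qed
qed

end
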